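(* Let $d\ge 1$ and $p\ge 2$ be integers, let $s\ge p$ be an integer, and let $L,M>0$. Let $f:\mathbb{R}^d\to\mathbb{R}$ be a convex function with a minimizer $x^*$. Let $y_c=[v_c;x_c;t_c]\in\mathbb{R}^{2d+1}$ with $t_c\ge 1$, and set $R=1/t_c$. Suppose that on the closed ball $B(x_c,R)=\{x\in\mathbb{R}^d:\|x-x_c\|\le R\}$ the function $f$ is $(s+1)$-times continuously differentiable and satisfies (i) $\|\nabla^{(i)} f(x)\|\le \big[L\,(f(x)-f(x^* ))\big]^{\frac{p-i}{p}}$ for all $x\in B(x_c,R)$ and all $i\in\{1,\dots,p-1\}$, and (ii) $\|\nabla^{(i)} f(x)\|\le M$ for all $x\in B(x_c,R)$ and all $i\in\{p,\dots,s+1\}$. Then for every $y=[v;x;t]\in U_{R,0.2}(y_c)$ and every $i\in\{1,\dots,p\}$, $$\|\nabla^{(i)} f(x)\|\le p\,(M+L+1)\,\frac{\mathcal{E}(y_c)+1}{t_c^{\,p-i}}.$$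
   Context: Norms of derivative tensors $\nabla^{(i)}f(x)$ are operator norms (viewing $\nabla^{(i)}f(x)$ as a multilinear map on $(\mathbb{R}^d)^i$). Points of $\mathbb{R}^{2d+1}$ are written $y=[v;x;t]$ with $v,x\in\mathbb{R}^d$, $t\in\mathbb{R}$. The set $U_{R,0.2}(y_c)=\{[v;x;t]:\|v-v_c\|\le R,\ \|x-x_c\|\le R,\ |t-t_c|\le 0.2\}$. The Lyapunov function is $\mathcal{E}([v;x;t])=\frac{t^2}{4p^2}\|v\|^2+\big\|x+\frac{t}{2p}v-x^*\big\|^2+t^p\,(f(x)-f(x^* ))$. *)

theory Defs
  imports "HOL-Analysis.Analysis"
begin

text \<open>Higher derivatives as multilinear maps, evaluated on a list of directions.
  dderiv S f [h1,...,hk] x is the k-th Frechet derivative of f (taken within S)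
  at x applied to (h1,...,hk); the newest (outermost) differentiation direction is the head.\<close>
fun dderiv :: "'a::euclidean_space set \<Rightarrow> ('a \<Rightarrow> real) \<Rightarrow> 'a list \<Rightarrow> 'a \<Rightarrow> real" where
  "dderiv S f [] = f"
| "dderiv S f (h # hs) = (\<lambda>x. frechet_derivative (dderiv S f hs) (at x within S) h)"

definition Ck_on :: "nat \<Rightarrow> 'a::euclidean_space set \<Rightarrow> ('a \<Rightarrow> real) \<Rightarrow> bool" where
  "Ck_on k S f \<longleftrightarrow>
     (\<forall>hs. length hs < k \<longrightarrow> (\<forall>x\<in>S.
        (dderiv S f hs has_derivative (\<lambda>h. dderiv S f (h # hs) x)) (at x within S))) \<and>
     (\<forall>hs. length hs \<le> k \<longrightarrow> continuous_on S (dderiv S f hs))"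

definition dnorm :: "nat \<Rightarrow> 'a::euclidean_space set \<Rightarrow> ('a \<Rightarrow> real) \<Rightarrow> 'a \<Rightarrow> real" where
  "dnorm i S f x = Sup {\<bar>dderiv S f hs x\<bar> | hs. length hs = i \<and> (\<forall>h\<in>set hs. norm h \<le> 1)}"

definition lyap :: "nat \<Rightarrow> ('a::euclidean_space \<Rightarrow> real) \<Rightarrow> 'a \<Rightarrow> 'a \<Rightarrow> 'a \<Rightarrow> real \<Rightarrow> real" where
  "lyap p f xstar v x t =
     t\<^sup>2 / (4 * (real p)\<^sup>2) * (norm v)\<^sup>2 + (norm (x + (t / (2 * real p)) *\<^sub>R v - xstar))\<^sup>2
     + t ^ p * (f x - f xstar)"

end

theory Submission
  imports Defs "HOL-Analysis.Analysis"
begin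


declare dderiv.simps(2)[simp del]

lemma Ck_deriv:
  assumes "Ck_on N S f" "length hs < N" "x \<in> S"
  shows "(dderiv S f hs has_derivative (\<lambda>h. dderiv S f (h # hs) x)) (at x within S)"
  using assms unfolding Ck_on_def by blast

lemma Ck_cont:
  assumes "Ck_on N S f" "length hs \<le> N"
  shows "continuous_on S (dderiv S f hs)"
  using assms unfolding Ck_on_def by blast

lemma eq_on_cball:
  fixes F G :: "'a::euclidean_space \<Rightarrow> real"
  assumes R: "R > 0" and cF: "continuous_on (cball c R) F" and cG: "continuous_on (cball c R) G"
    and eq: "\<And>y. y \<in> ball c R \<Longrightarrow> F y = G y" and y: "y \<in> cball c R"
  shows "F y = G y"
proof -
  have cl: "closure (ball c R) = cball c R" using R by simp
  have "(\<lambda>y. F y - G y) y = 0"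
    apply (rule continuous_constant_on_closure[where S="ball c R"])
    using cF cG eq y cl by (auto intro: continuous_on_diff)
  then show ?thesis by simp
qed

lemma dderiv_lin:
  fixes f :: "'a::euclidean_space \<Rightarrow> real"
  assumes ck: "Ck_on N (cball c R) f" and R: "R > 0"
  shows "length as + length bs < N \<Longrightarrow> y \<in> cball c R \<Longrightarrow>
    linear (\<lambda>h. dderiv (cball c R) f (as @ h # bs) y)"
proof (induction as arbitrary: y)
  case Nil
  have "(dderiv (cball c R) f bs has_derivative (\<lambda>h. dderiv (cball c R) f (h # bs) y)) (at y within cball c R)"
    using Ck_deriv[OF ck] Nil by simp
  then show ?case using has_derivative_linear by simp
next
  case (Cons a as)
  let ?S = "cball c R"
  let ?G = "\<lambda>h. dderiv ?S f (as @ h # bs)"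
  have lenG: "length (as @ h # bs) < N" for h using Cons.prems by simp
  have IH: "\<And>z. z \<in> ?S \<Longrightarrow> linear (\<lambda>h. ?G h z)" using Cons by simp
  have derat: "(?G h has_derivative (\<lambda>a. dderiv ?S f (a # as @ h # bs) z)) (at z)"
    if "z \<in> ball c R" for h z
  proof -
    have "z \<in> ?S" using that by auto
    from Ck_deriv[OF ck lenG this] have "(?G h has_derivative (\<lambda>a. dderiv ?S f (a # as @ h # bs) z)) (at z within ?S)" .
    moreover have "at z within ?S = at z"
      using that by (metis at_within_interior interior_cball)
    ultimately show ?thesis by (simp only:)
  qed
  have add_in: "dderiv ?S f (a # as @ (h1 + h2) # bs) z = dderiv ?S f (a # as @ h1 # bs) z + dderiv ?S f (a # as @ h2 # bs) z"
    if "z \<in> ball c R" for h1 h2 z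
  proof -
    have "((\<lambda>w. ?G h1 w + ?G h2 w) has_derivative (\<lambda>a. dderiv ?S f (a # as @ h1 # bs) z + dderiv ?S f (a # as @ h2 # bs) z)) (at z)"
      using derat[OF that] by (intro has_derivative_add) auto
    then have "(?G (h1 + h2) has_derivative (\<lambda>a. dderiv ?S f (a # as @ h1 # bs) z + dderiv ?S f (a # as @ h2 # bs) z)) (at z)"
      apply (rule has_derivative_transform_within_open[where s="ball c R"])
      using that apply auto[2]
      subgoal for w using IH[of w] linear_add[of "\<lambda>h. ?G h w" h1 h2] by auto
      done
    from has_derivative_unique[OF derat[OF that] this]
    show ?thesis by meson
  qed
  have scale_in: "dderiv ?S f (a # as @ (r *\<^sub>R h) # bs) z = r * dderiv ?S f (a # as @ h # bs) z"
    if "z \<in> ball c R" for r h z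
  proof -
    have "((\<lambda>w. r * ?G h w) has_derivative (\<lambda>a. r * dderiv ?S f (a # as @ h # bs) z)) (at z)"
      using derat[OF that] by (intro has_derivative_mult_right) auto
    then have "(?G (r *\<^sub>R h) has_derivative (\<lambda>a. r * dderiv ?S f (a # as @ h # bs) z)) (at z)"
      apply (rule has_derivative_transform_within_open[where s="ball c R"])
      using that apply auto[2]
      subgoal for w using IH[of w] linear_scale[of "\<lambda>h. ?G h w" r h] by auto
      done
    from has_derivative_unique[OF derat[OF that] this]
    show ?thesis by meson
  qed
  have lenC: "length (a # as @ h # bs) \<le> N" for h using Cons.prems by simp
  note cont = Ck_cont[OF ck lenC]
  show ?case
  proof (rule linearI)
    fix h1 h2
    show "dderiv ?S f ((a # as) @ (h1 + h2) # bs) y = dderiv ?S f ((a # as) @ h1 # bs) y + dderiv ?S f ((a # as) @ h2 # bs) y"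
      using eq_on_cball[OF R cont[of "h1+h2"] continuous_on_add[OF cont[of h1] cont[of h2]] add_in Cons.prems(2)]
      by simp
  next
    fix r h
    show "dderiv ?S f ((a # as) @ (r *\<^sub>R h) # bs) y = r *\<^sub>R dderiv ?S f ((a # as) @ h # bs) y"
      using eq_on_cball[OF R cont[of "r *\<^sub>R h"] continuous_on_mult_left[OF cont[of h]] scale_in Cons.prems(2)]
      by simp
  qed
qed



lemma dderiv_bdd_gen:
  fixes f :: "'a::euclidean_space \<Rightarrow> real"
  assumes ck: "Ck_on N (cball c R) f" and R: "R > 0" and y: "y \<in> cball c R"
  shows "length as + n \<le> N \<Longrightarrow> \<exists>C. \<forall>bs. length bs = n \<and> (\<forall>h\<in>set bs. norm h \<le> 1)
           \<longrightarrow> \<bar>dderiv (cball c R) f (as @ bs) y\<bar> \<le> C"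
proof (induction n arbitrary: as)
  case 0
  then show ?case by auto
next
  case (Suc n)
  let ?S = "cball c R"
  have "\<forall>i\<in>Basis. \<exists>C. \<forall>bs. length bs = n \<and> (\<forall>h\<in>set bs. norm h \<le> 1)
           \<longrightarrow> \<bar>dderiv ?S f ((as @ [i]) @ bs) y\<bar> \<le> C"
  proof
    fix i :: 'a assume "i \<in> Basis"
    show "\<exists>C. \<forall>bs. length bs = n \<and> (\<forall>h\<in>set bs. norm h \<le> 1)
           \<longrightarrow> \<bar>dderiv ?S f ((as @ [i]) @ bs) y\<bar> \<le> C"
      by (rule Suc.IH) (use Suc.prems in simp)
  qed
  then obtain C where C: "\<And>i bs. i \<in> Basis \<Longrightarrow> length bs = n \<Longrightarrow> (\<forall>h\<in>set bs. norm h \<le> 1)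
           \<Longrightarrow> \<bar>dderiv ?S f (as @ i # bs) y\<bar> \<le> C i"
    by (metis append_Cons append_Nil append_assoc bchoice)
  show ?case
  proof (intro exI allI impI)
    fix bs :: "'a list"
    assume bs: "length bs = Suc n \<and> (\<forall>h\<in>set bs. norm h \<le> 1)"
    then obtain h bs' where hb: "bs = h # bs'" by (cases bs) auto
    have bs': "length bs' = n" "\<forall>h\<in>set bs'. norm h \<le> 1" and h: "norm h \<le> 1" using bs hb by auto
    have lin: "linear (\<lambda>h. dderiv ?S f (as @ h # bs') y)"
      by (rule dderiv_lin[OF ck R _ y]) (use Suc.prems bs' in simp)
    have "dderiv ?S f (as @ h # bs') y = dderiv ?S f (as @ (\<Sum>i\<in>Basis. (h \<bullet> i) *\<^sub>R i) # bs') y"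
      by (simp add: euclidean_representation)
    also have "\<dots> = (\<Sum>i\<in>Basis. (h \<bullet> i) * dderiv ?S f (as @ i # bs') y)"
      using linear_sum[OF lin, of "\<lambda>i. (h \<bullet> i) *\<^sub>R i" Basis] linear_scale[OF lin] by simp
    finally have eq: "dderiv ?S f (as @ h # bs') y = (\<Sum>i\<in>Basis. (h \<bullet> i) * dderiv ?S f (as @ i # bs') y)" .
    have "\<bar>dderiv ?S f (as @ h # bs') y\<bar> \<le> (\<Sum>i\<in>Basis. \<bar>(h \<bullet> i) * dderiv ?S f (as @ i # bs') y\<bar>)"
      unfolding eq by (rule sum_abs)
    also have "\<dots> \<le> (\<Sum>i\<in>Basis. C i)"
    proof (rule sum_mono)
      fix i :: 'a assume i: "i \<in> Basis"
      have a: "\<bar>h \<bullet> i\<bar> \<le> 1" using Basis_le_norm[OF i, of h] h by simp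
      have b: "\<bar>dderiv ?S f (as @ i # bs') y\<bar> \<le> C i" using C[OF i bs'] .
      show "\<bar>(h \<bullet> i) * dderiv ?S f (as @ i # bs') y\<bar> \<le> C i"
        unfolding abs_mult using mult_mono[OF a b] by simp
    qed
    finally show "\<bar>dderiv ?S f (as @ bs) y\<bar> \<le> (\<Sum>i\<in>Basis. C i)" using hb by simp
  qed
qed

lemma dnorm_upper:
  fixes f :: "'a::euclidean_space \<Rightarrow> real"
  assumes ck: "Ck_on N (cball c R) f" and R: "R > 0" and y: "y \<in> cball c R"
    and len: "length hs = n" "n \<le> N" and hs: "\<forall>h\<in>set hs. norm h \<le> 1"
  shows "\<bar>dderiv (cball c R) f hs y\<bar> \<le> dnorm n (cball c R) f y"
proof -
  obtain C where C: "\<And>bs. length bs = n \<Longrightarrow> (\<forall>h\<in>set bs. norm h \<le> 1)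
           \<Longrightarrow> \<bar>dderiv (cball c R) f bs y\<bar> \<le> C"
    using dderiv_bdd_gen[OF ck R y, of "[]" n] len by auto
  show ?thesis unfolding dnorm_def
    by (rule cSup_upper) (use len hs C in \<open>auto intro!: bdd_aboveI\<close>)
qed



lemma taylor_dir:
  fixes f :: "'a::euclidean_space \<Rightarrow> real"
  assumes ck: "Ck_on N (cball c R) f" and R: "R > 0" and x: "x \<in> ball c R" and xc: "x \<noteq> c"
    and n: "n > 0" "length hs + n \<le> N"
  defines "r \<equiv> norm (x - c)" and "e \<equiv> (1 / norm (x - c)) *\<^sub>R (x - c)"
  shows "\<exists>t. 0 < t \<and> t < r \<and> dderiv (cball c R) f hs x =
     (\<Sum>m<n. dderiv (cball c R) f (replicate m e @ hs) c / fact m * r ^ m)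
     + dderiv (cball c R) f (replicate n e @ hs) (c + t *\<^sub>R e) / fact n * r ^ n"
proof -
  let ?S = "cball c R"
  define diff where "diff = (\<lambda>m \<tau>. dderiv ?S f (replicate m e @ hs) (c + \<tau> *\<^sub>R e))"
  have r0: "r > 0" using xc unfolding r_def by simp
  have rR: "r < R" using x unfolding r_def by (simp add: dist_norm norm_minus_commute)
  have ne: "norm e = 1" using xc unfolding e_def by simp
  have xe: "c + r *\<^sub>R e = x" using xc unfolding r_def e_def by simp
  have D: "DERIV (diff m) t :> diff (Suc m) t" if m: "m < n" and t: "0 \<le> t" "t \<le> r" for m t
  proof -
    let ?L = "replicate m e @ hs"
    let ?z = "c + t *\<^sub>R e"
    have zb: "?z \<in> ball c R" using t rR ne by (simp add: dist_norm)
    then have zS: "?z \<in> ?S" by auto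
    have len: "length ?L < N" using m n by simp
    have d1: "(dderiv ?S f ?L has_derivative (\<lambda>h. dderiv ?S f (h # ?L) ?z)) (at ?z within ?S)"
      by (rule Ck_deriv[OF ck len zS])
    moreover have "at ?z within ?S = at ?z"
      using zb by (metis at_within_interior interior_cball)
    ultimately have d2: "(dderiv ?S f ?L has_derivative (\<lambda>h. dderiv ?S f (h # ?L) ?z)) (at ?z)"
      by (simp only:)
    have lin: "linear (\<lambda>h. dderiv ?S f (h # ?L) ?z)"
      using d2 has_derivative_linear by blast
    have g: "((\<lambda>\<tau>. c + \<tau> *\<^sub>R e) has_derivative (\<lambda>\<tau>. \<tau> *\<^sub>R e)) (at t)"
      by (auto intro!: derivative_eq_intros)
    have d3: "((\<lambda>\<tau>. dderiv ?S f ?L (c + \<tau> *\<^sub>R e)) has_derivative (\<lambda>\<tau>. dderiv ?S f ((\<tau> *\<^sub>R e) # ?L) ?z)) (at t)"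
      using has_derivative_compose[OF g d2] .
    have eqf: "(\<lambda>\<tau>. dderiv ?S f ((\<tau> *\<^sub>R e) # ?L) ?z) = (*) (dderiv ?S f (e # ?L) ?z)"
      using linear_scale[OF lin] by (auto simp: fun_eq_iff)
    show ?thesis
      unfolding has_field_derivative_def diff_def using d3 eqf by simp
  qed
  have "\<exists>t. 0 < t \<and> t < r \<and>
    diff 0 r = (\<Sum>m<n. (diff m 0 / fact m) * (r - 0)^m) + (diff n t / fact n) * (r - 0)^n"
    by (rule Taylor_up[where diff=diff and a=0]) (use n r0 D in auto)
  then show ?thesis unfolding diff_def using xe by simp
qed



lemma powr_le_plus1:
  fixes B th :: real
  assumes "B \<ge> 0" "0 \<le> th" "th \<le> 1"
  shows "B powr th \<le> B + 1"
proof (cases "B \<le> 1")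
  case True
  then have "B powr th \<le> 1"
    using powr_mono2[of th B 1] assms by simp
  then show ?thesis using assms by linarith
next
  case False
  then have "B powr th \<le> B powr 1" using assms by (intro powr_mono) auto
  then show ?thesis using False by simp
qed

lemma term_bound:
  fixes A LE tc r :: real and k m n p :: nat
  assumes A: "A \<ge> 0" and AL: "A * tc ^ p \<le> LE" and tc: "tc \<ge> 1"
    and r: "0 \<le> r" "r \<le> 1 / tc" and kmn: "k + m = n" and k: "k \<le> p" and p: "p > 0"
  shows "A powr (real k / real p) * r ^ m \<le> (LE + 1) / tc ^ n"
proof -
  have tc0: "tc > 0" using tc by simp
  define B where "B = A * tc ^ p"
  have B0: "B \<ge> 0" using A tc0 unfolding B_def by simp
  have "(tc ^ p) powr (real k / real p) = tc powr (real p * (real k / real p))"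
    using tc0 by (simp add: powr_powr powr_realpow[symmetric])
  also have "\<dots> = tc ^ k" using p tc0 by (simp add: powr_realpow)
  finally have tcp: "(tc ^ p) powr (real k / real p) = tc ^ k" .
  have "B powr (real k / real p) = A powr (real k / real p) * tc ^ k"
    unfolding B_def using A tc0 by (simp add: powr_mult tcp)
  then have Aeq: "A powr (real k / real p) = B powr (real k / real p) / tc ^ k"
    using tc0 by (simp add: field_simps)
  have Bb: "B powr (real k / real p) \<le> LE + 1"
    using powr_le_plus1[OF B0, of "real k / real p"] k p AL unfolding B_def by (simp add: field_simps)
  have LE0: "LE + 1 \<ge> 0" using Bb powr_ge_zero[of B "real k / real p"] by linarith
  have rm: "r ^ m \<le> 1 / tc ^ m"
    using power_mono[OF r(2) r(1), of m] by (simp add: power_divide)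
  have "A powr (real k / real p) * r ^ m \<le> ((LE + 1) / tc ^ k) * (1 / tc ^ m)"
    unfolding Aeq
    by (rule mult_mono) (use Bb tc0 rm r LE0 in \<open>auto intro!: divide_right_mono\<close>)
  also have "\<dots> = (LE + 1) / tc ^ n" using kmn[symmetric] by (simp add: power_add)
  finally show ?thesis .
qed



theorem mainTheorem1:
  fixes f :: "'a::euclidean_space \<Rightarrow> real"
    and xstar vc xc :: 'a
    and tc L M :: real
    and p s :: nat
  assumes p2: "p \<ge> 2" and sp: "s \<ge> p" and L: "L > 0" and M: "M > 0"
    and cvx: "convex_on UNIV f"
    and minz: "\<forall>x. f xstar \<le> f x"
    and tc: "tc \<ge> 1"
    and smooth: "Ck_on (s + 1) (cball xc (1 / tc)) f"
    and hi: "\<forall>x\<in>cball xc (1 / tc). \<forall>i\<in>{1..p-1}.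
               dnorm i (cball xc (1 / tc)) f x \<le> (L * (f x - f xstar)) powr ((real p - real i) / real p)"
    and hii: "\<forall>x\<in>cball xc (1 / tc). \<forall>i\<in>{p..s+1}. dnorm i (cball xc (1 / tc)) f x \<le> M"
  shows "\<forall>v x t. norm (v - vc) \<le> 1 / tc \<and> norm (x - xc) \<le> 1 / tc \<and> \<bar>t - tc\<bar> \<le> 0.2 \<longrightarrow>
           (\<forall>i\<in>{1..p}. dnorm i (cball xc (1 / tc)) f x
              \<le> real p * (M + L + 1) * (lyap p f xstar vc xc tc + 1) / tc ^ (p - i))"
proof -
  let ?S = "cball xc (1 / tc)"
  define E where "E = lyap p f xstar vc xc tc"
  define A where "A = L * (f xc - f xstar)"
  define Bnd where "Bnd = real p * (M + L + 1) * (E + 1)"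
  have tc0: "tc > 0" using tc by simp
  have R0: "1 / tc > 0" using tc0 by simp
  have xcS: "xc \<in> ?S" using R0 by simp
  have gc: "f xc - f xstar \<ge> 0" using minz by simp
  have A0: "A \<ge> 0" using gc L unfolding A_def by simp
  have Eg: "tc ^ p * (f xc - f xstar) \<le> E"
    unfolding E_def lyap_def by simp
  have E0: "E \<ge> 0" using Eg gc tc0 by (meson order_trans zero_le_mult_iff zero_le_power less_imp_le)
  have AL: "A * tc ^ p \<le> L * E"
  proof -
    have "A * tc ^ p = L * (tc ^ p * (f xc - f xstar))" unfolding A_def by (simp add: algebra_simps)
    also have "\<dots> \<le> L * E" using mult_left_mono[OF Eg, of L] L by simp
    finally show ?thesis .
  qed
  have MB: "M \<le> (M + L + 1) * (E + 1)"
  proof -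
    have "M * 1 \<le> (M + L + 1) * (E + 1)" using M L E0 by (intro mult_mono) auto
    then show ?thesis by simp
  qed
  have LEB: "L * E + 1 \<le> (M + L + 1) * (E + 1)"
    using M L E0 by (simp add: algebra_simps)
  have pt: "\<bar>dderiv ?S f hs x\<bar> \<le> Bnd / tc ^ (p - i)"
    if x: "x \<in> ?S" and i: "1 \<le> i" "i < p" and hs: "length hs = i" "\<forall>h\<in>set hs. norm h \<le> 1" for x i hs
  proof -
    define n where "n = p - i"
    have n0: "n > 0" and n1: "n \<le> p - 1" using i unfolding n_def by auto
    have sumB: "real n * (L * E + 1) + M \<le> Bnd"
    proof -
      have "real n * (L * E + 1) \<le> (real p - 1) * ((M + L + 1) * (E + 1))"
        using n1 p2 LEB L E0 by (intro mult_mono) auto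
      then show ?thesis unfolding Bnd_def using MB by (simp add: algebra_simps)
    qed
    have "L * E + 1 \<le> real n * (L * E + 1)"
      using mult_right_mono[of 1 "real n" "L * E + 1"] n0 L E0 by auto
    then have Bpos: "(L * E + 1) \<le> Bnd"
      using sumB M by linarith
    have inner: "\<bar>dderiv ?S f hs x\<bar> \<le> Bnd / tc ^ n" if xb: "x \<in> ball xc (1 / tc)" for x
    proof (cases "x = xc")
      case True
      have "\<bar>dderiv ?S f hs xc\<bar> \<le> dnorm i ?S f xc"
        by (rule dnorm_upper[OF smooth R0 xcS hs(1) _ hs(2)]) (use i sp in auto)
      also have "\<dots> \<le> A powr ((real p - real i) / real p)"
        using hi xcS i unfolding A_def by auto
      also have "\<dots> = A powr (real n / real p) * 0 ^ 0" using i unfolding n_def by (simp add: of_nat_diff)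
      also have "\<dots> \<le> (L * E + 1) / tc ^ n"
        by (rule term_bound[OF A0 AL tc]) (use R0 n1 p2 in auto)
      also have "\<dots> \<le> Bnd / tc ^ n" using Bpos tc0 by (simp add: divide_right_mono)
      finally show ?thesis using True by simp
    next
      case False
      define r where "r = norm (x - xc)"
      define e where "e = (1 / norm (x - xc)) *\<^sub>R (x - xc)"
      have ne: "norm e = 1" using False unfolding e_def by simp
      have rR: "r \<le> 1 / tc" "r \<ge> 0" using xb unfolding r_def by (auto simp: dist_norm norm_minus_commute)
      obtain t where t: "0 < t" "t < r" and tay: "dderiv ?S f hs x =
         (\<Sum>m<n. dderiv ?S f (replicate m e @ hs) xc / fact m * r ^ m)
         + dderiv ?S f (replicate n e @ hs) (xc + t *\<^sub>R e) / fact n * r ^ n"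
        using taylor_dir[OF smooth R0 xb False n0, of hs] hs i sp unfolding n_def r_def e_def by auto
      have hse: "\<forall>h\<in>set (replicate m e @ hs). norm h \<le> 1" for m using hs ne by auto
      have tm: "\<bar>dderiv ?S f (replicate m e @ hs) xc / fact m * r ^ m\<bar> \<le> (L * E + 1) / tc ^ n"
        if m: "m < n" for m
      proof -
        have "\<bar>dderiv ?S f (replicate m e @ hs) xc / fact m * r ^ m\<bar>
            = \<bar>dderiv ?S f (replicate m e @ hs) xc\<bar> / fact m * r ^ m"
          using rR by (simp add: abs_mult)
        also have "\<dots> \<le> \<bar>dderiv ?S f (replicate m e @ hs) xc\<bar> * r ^ m"
        proof -
          have "\<bar>dderiv ?S f (replicate m e @ hs) xc\<bar> / fact m \<le> \<bar>dderiv ?S f (replicate m e @ hs) xc\<bar>"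
            using divide_left_mono[of 1 "fact m" "\<bar>dderiv ?S f (replicate m e @ hs) xc\<bar>"] fact_ge_1[of m, where 'a=real] by simp
          then show ?thesis using rR by (intro mult_right_mono) auto
        qed
        also have "\<dots> \<le> dnorm (m + i) ?S f xc * r ^ m"
          by (rule mult_right_mono[OF dnorm_upper[OF smooth R0 xcS _ _ hse]]) (use m hs rR sp n_def in auto)
        also have "\<dots> \<le> A powr ((real p - real (m + i)) / real p) * r ^ m"
        proof -
          have "m + i \<in> {1..p-1}" using i m unfolding n_def by auto
          from hi[rule_format, OF xcS this] show ?thesis
            using rR unfolding A_def by (intro mult_right_mono) auto
        qed
        also have "\<dots> = A powr (real (n - m) / real p) * r ^ m"
          using m i unfolding n_def by (simp add: of_nat_diff add.commute)
        also have "\<dots> \<le> (L * E + 1) / tc ^ n"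
          by (rule term_bound[OF A0 AL tc rR(2) rR(1)]) (use m n1 p2 in auto)
        finally show ?thesis .
      qed
      have xtb: "xc + t *\<^sub>R e \<in> ?S" using t rR ne by (simp add: dist_norm)
      have rem: "\<bar>dderiv ?S f (replicate n e @ hs) (xc + t *\<^sub>R e) / fact n * r ^ n\<bar> \<le> M / tc ^ n"
      proof -
        have "\<bar>dderiv ?S f (replicate n e @ hs) (xc + t *\<^sub>R e) / fact n * r ^ n\<bar>
            = \<bar>dderiv ?S f (replicate n e @ hs) (xc + t *\<^sub>R e)\<bar> / fact n * r ^ n"
          using rR by (simp add: abs_mult)
        also have "\<dots> \<le> \<bar>dderiv ?S f (replicate n e @ hs) (xc + t *\<^sub>R e)\<bar> * r ^ n"
        proof -
          have "\<bar>dderiv ?S f (replicate n e @ hs) (xc + t *\<^sub>R e)\<bar> / fact n \<le> \<bar>dderiv ?S f (replicate n e @ hs) (xc + t *\<^sub>R e)\<bar>"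
            using divide_left_mono[of 1 "fact n" "\<bar>dderiv ?S f (replicate n e @ hs) (xc + t *\<^sub>R e)\<bar>"] fact_ge_1[of n, where 'a=real] by simp
          then show ?thesis using rR by (intro mult_right_mono) auto
        qed
        also have "\<dots> \<le> dnorm p ?S f (xc + t *\<^sub>R e) * r ^ n"
          by (rule mult_right_mono[OF dnorm_upper[OF smooth R0 xtb _ _ hse]]) (use hs rR sp n_def i in auto)
        also have "\<dots> \<le> M * r ^ n"
          using hii xtb sp rR by (intro mult_right_mono) auto
        also have "\<dots> \<le> M * (1 / tc) ^ n"
          using M rR by (intro mult_left_mono power_mono) auto
        finally show ?thesis by (simp add: power_divide)
      qed
      have "\<bar>dderiv ?S f hs x\<bar> \<le> (\<Sum>m<n. \<bar>dderiv ?S f (replicate m e @ hs) xc / fact m * r ^ m\<bar>)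
          + \<bar>dderiv ?S f (replicate n e @ hs) (xc + t *\<^sub>R e) / fact n * r ^ n\<bar>"
        unfolding tay by (rule order_trans[OF abs_triangle_ineq add_right_mono[OF sum_abs]])
      also have "\<dots> \<le> (\<Sum>m<n. (L * E + 1) / tc ^ n) + M / tc ^ n"
        by (intro add_mono sum_mono tm rem) auto
      also have "\<dots> = (real n * (L * E + 1) + M) / tc ^ n"
        using tc0 by (simp add: field_simps)
      also have "\<dots> \<le> Bnd / tc ^ n"
        using sumB tc0 by (simp add: divide_right_mono)
      finally show ?thesis .
    qed
    have cont: "continuous_on (closure (ball xc (1 / tc))) (\<lambda>y. \<bar>dderiv ?S f hs y\<bar>)"
      using Ck_cont[OF smooth, of hs] hs i sp R0 by (auto intro: continuous_on_rabs)
    have "\<bar>dderiv ?S f hs x\<bar> \<le> Bnd / tc ^ n"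
      by (rule continuous_le_on_closure[OF cont, of x]) (use x R0 inner in auto)
    then show ?thesis unfolding n_def .
  qed
  show ?thesis
  proof (intro allI impI ballI)
    fix v x t i
    assume H: "norm (v - vc) \<le> 1 / tc \<and> norm (x - xc) \<le> 1 / tc \<and> \<bar>t - tc\<bar> \<le> 0.2"
      and i: "i \<in> {1..p}"
    have x: "x \<in> ?S" using H by (simp add: dist_norm norm_minus_commute)
    show "dnorm i ?S f x \<le> real p * (M + L + 1) * (lyap p f xstar vc xc tc + 1) / tc ^ (p - i)"
    proof (cases "i = p")
      case True
      have "dnorm i ?S f x \<le> M" using hii x True sp by auto
      also have "\<dots> \<le> Bnd"
      proof -
        have "(M + L + 1) * (E + 1) \<le> real p * ((M + L + 1) * (E + 1))"
          using mult_right_mono[of 1 "real p" "(M + L + 1) * (E + 1)"] p2 M L E0 by auto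
        then show ?thesis using MB unfolding Bnd_def by (simp add: algebra_simps)
      qed
      finally show ?thesis using True unfolding Bnd_def E_def by simp
    next
      case False
      then have i': "1 \<le> i" "i < p" using i by auto
      have "dnorm i ?S f x \<le> Bnd / tc ^ (p - i)"
        unfolding dnorm_def
      proof (rule cSup_least)
        show "{\<bar>dderiv ?S f hs x\<bar> |hs. length hs = i \<and> (\<forall>h\<in>set hs. norm h \<le> 1)} \<noteq> {}"
          by (rule ccontr) (auto dest: spec[of _ "replicate i 0"])
      next
        fix z assume "z \<in> {\<bar>dderiv ?S f hs x\<bar> |hs. length hs = i \<and> (\<forall>h\<in>set hs. norm h \<le> 1)}"
        then obtain hs where "z = \<bar>dderiv ?S f hs x\<bar>" "length hs = i" "\<forall>h\<in>set hs. norm h \<le> 1" by auto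
        then show "z \<le> Bnd / tc ^ (p - i)" using pt[OF x i'] by auto
      qed
      then show ?thesis unfolding Bnd_def E_def .
    qed
  qed
qed


end
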